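(* Assume the axiomatic setting described in the context, with Axioms (A1)–(A4). Suppose that for some $1\le p<\infty$ and $\beta>0$ with $Q-(\beta+\theta)p>0$ there is $C=C_{p,\beta}>0$ such that $$\nu(\{u\in Y:(\chi_E)^d_\delta(u)>\lambda\})\le C\lambda^{-p}\delta^{-\beta p}\mu(E)$$ for every $\mu$-measurable $E\subset X$, every $\lambda>0$ and every $0<\delta<1$. Then the Hausdorff dimension with respect to $d$ of every generalized Kakeya set in $X$ is at least $Q-(\beta+\theta)p$.
   Context: Let $(X,d)$ be a complete separable metric space with a Borel measure $\mu$ and constants $Q>1/2$, $C_0\in(0,\infty)$ such that $\mu(B_d(x,r))\le C_0r^Q$ for all $x\in X$ and $0<r<\mathrm{diam}_d(X)$ ($B_d$ closed balls). Let $d'$ be a second metric on $X$ with $(X,d')$ separable. Let $(Z,d_Z)$ be a metric space, $Y\subset Z$ compact, $\nu$ a Borel measure on $Z$ with $0<\nu(Y)\le1$, and $1\le S<2Q$, $0<\tilde c_0\le\tilde C_0$ with $\tilde c_0r^S\le\nu(B_{d_Z}(u,r))\le\tilde C_0r^S$ for $u\in Y$, $0<r<\mathrm{diam}_{d_Z}(Y)$. Let $\mathcal A$ be a set of parameters; to each $a\in\mathcal A$, $u\in Y$ are associated $F_u(a)\subset I_u(a)\subset\tilde I_u(a)\subset X$ with $c\le\mathrm{diam}_{d'}I_u(a)\le c'$, $\mathrm{diam}_{d'}\tilde I_u(a)\le\bar c\,\mathrm{diam}_{d'}I_u(a)$ (constants $0<c\le c'$, $\bar c\ge1$), and a measure $\mu_{u,a}$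 on $F_u(a)$ with total mass $1$, doubling with a uniform constant: $\mu_{u,a}(F_u(a)\cap B_d(x,2r))\le C\mu_{u,a}(F_u(a)\cap B_d(x,r))$ for $x\in F_u(a)$. For $0<\delta<1$, $T^\delta_u(a)=\{x:d(x,I_u(a))\le\delta\}$, $\tilde T^{W\delta}_u(a)=\{x:d(x,\tilde I_u(a))\le W\delta\}$, with $W$ from (A4). Axioms: (A1) $u\mapsto\mu(T^\delta_u(a))$ is continuous on $Y$; there are $S/2<T<Q$, $0<c_1\le c_2$ with $c_1\delta^T\le\mu(T^\delta_u(a))\le\mu(\tilde T^{W\delta}_u(a))\le c_2\delta^T$, and $\mu(A)\le c_2\,\mathrm{diam}_{d'}(A)\delta^T$ for $A\subset\tilde T^{W\delta}_u(a)$. (A2) There are $0\le\theta<\frac{2Q-2T+S}{S+2}$, $K'>0$, $K\ge1$ such that for all $a,u$, $x\in F_u(a)$, $\delta\le r\le2\delta$: if $\mu_{u,a}(F_u(a)\cap B_d(x,r))=M>0$ then $\mu(T^\delta_u(a)\cap B_d(x,Kr))\ge K'M\delta^\theta\mu(T^\delta_u(a))$. (A3) There is $b>0$ with $\mathrm{diam}_{d'}(\tilde T^{W\delta}_u(a)\cap\tilde T^{W\delta}_v(a'))\le b\delta/d_Z(u,v)$. (A4) There are $0<W,\bar N<\infty$ such that if $d_Z(u,v)\le\delta$, $a\in\mathcal A$, then $T^\delta_u(a)$ is covered by at most $\bar N$ tubes $\tilde T^{W\delta}_v(b_k)$, $b_k\in\mathcal A$. A generalized Kakeya set is $B\subset X$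 with $\mu(B)=0$ such that each $u\in Y$ has some $a\in\mathcal A$ with $F_u(a)\subset B$. For $f\in L^1_{loc}(X,\mu)$, $f^d_\delta(u)=\sup_{a\in\mathcal A}\frac1{\mu(T^\delta_u(a))}\int_{T^\delta_u(a)}|f|\,d\mu$; $\chi_E$ is the indicator of $E$. *)

theory Defs
  imports "HOL-Analysis.Analysis"
begin

definition ediam :: "('a \<Rightarrow> 'a \<Rightarrow> real) \<Rightarrow> 'a set \<Rightarrow> ennreal" where
  "ediam d A = (SUP x\<in>A. SUP y\<in>A. ennreal (d x y))"

definition setdist_pt :: "('a \<Rightarrow> 'a \<Rightarrow> real) \<Rightarrow> 'a \<Rightarrow> 'a set \<Rightarrow> real" where
  "setdist_pt d x A = (INF y\<in>A. d x y)"

definition cball_d :: "('a \<Rightarrow> 'a \<Rightarrow> real) \<Rightarrow> 'a \<Rightarrow> real \<Rightarrow> 'a set" where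
  "cball_d d x r = {y. d x y \<le> r}"

definition metric_borel :: "('a \<Rightarrow> 'a \<Rightarrow> real) \<Rightarrow> 'a measure" where
  "metric_borel d = sigma UNIV {U. openin (Metric_space.mtopology UNIV d) U}"

definition hausdorff_pre :: "('a \<Rightarrow> 'a \<Rightarrow> real) \<Rightarrow> real \<Rightarrow> real \<Rightarrow> 'a set \<Rightarrow> ennreal" where
  "hausdorff_pre d s eps A =
     (INF C \<in> {C :: nat \<Rightarrow> 'a set. A \<subseteq> (\<Union>i. C i) \<and> (\<forall>i. ediam d (C i) \<le> ennreal eps)}.
        (\<Sum>i. (if C i = {} then 0 else ennreal ((enn2real (ediam d (C i))) powr s))))"

definition hausdorff_measure :: "('a \<Rightarrow> 'a \<Rightarrow> real) \<Rightarrow> real \<Rightarrow> 'a set \<Rightarrow> ennreal" where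
  "hausdorff_measure d s A = (SUP eps\<in>{0<..}. hausdorff_pre d s eps A)"

definition hausdorff_dim :: "('a \<Rightarrow> 'a \<Rightarrow> real) \<Rightarrow> 'a set \<Rightarrow> ereal" where
  "hausdorff_dim d A = Inf (ereal ` {s. 0 < s \<and> hausdorff_measure d s A = 0})"

definition tube :: "('a \<Rightarrow> 'a \<Rightarrow> real) \<Rightarrow> ('z \<Rightarrow> 'p \<Rightarrow> 'a set) \<Rightarrow> real \<Rightarrow> 'z \<Rightarrow> 'p \<Rightarrow> 'a set" where
  "tube d I delta u a = {x. setdist_pt d x (I u a) \<le> delta}"

definition kakeya_maximal ::
  "'a measure \<Rightarrow> ('a \<Rightarrow> 'a \<Rightarrow> real) \<Rightarrow> 'p set \<Rightarrow> ('z \<Rightarrow> 'p \<Rightarrow> 'a set)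
     \<Rightarrow> ('a \<Rightarrow> real) \<Rightarrow> real \<Rightarrow> 'z \<Rightarrow> ennreal" where
  "kakeya_maximal mu d Par I f delta u =
     (SUP a\<in>Par. ennreal (1 / measure mu (tube d I delta u a)) *
        (\<integral>\<^sup>+ x. ennreal \<bar>f x\<bar> * indicator (tube d I delta u a) x \<partial>(completion mu)))"

definition generalized_kakeya ::
  "'a measure \<Rightarrow> 'z set \<Rightarrow> 'p set \<Rightarrow> ('z \<Rightarrow> 'p \<Rightarrow> 'a set) \<Rightarrow> 'a set \<Rightarrow> bool" where
  "generalized_kakeya mu Y Par F B \<longleftrightarrow>
     B \<in> null_sets (completion mu) \<and> (\<forall>u\<in>Y. \<exists>a\<in>Par. F u a \<subseteq> B)"

end

theory Submission
  imports Defs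
begin


lemma space_metric_borel[simp]: "space (metric_borel d) = UNIV"
  unfolding metric_borel_def by (simp add: space_measure_of)

lemma cball_metric_borel:
  assumes "Metric_space UNIV d"
  shows "cball_d d x r \<in> sets (metric_borel d)"
proof -
  interpret Metric_space UNIV d by fact
  have "closedin mtopology (cball_d d x r)"
  proof -
    have "cball_d d x r = mcball x r" by (simp add: cball_d_def mcball_def)
    then show ?thesis by simp
  qed
  then have o: "openin mtopology (UNIV - cball_d d x r)"
    unfolding closedin_def by simp
  have "UNIV - (UNIV - cball_d d x r) \<in> sigma_sets UNIV {U. openin mtopology U}"
    by (rule sigma_sets.Compl) (use o in \<open>auto intro: sigma_sets.Basic\<close>)
  moreover have "UNIV - (UNIV - cball_d d x r) = cball_d d x r" by blast
  ultimately show ?thesis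
    unfolding metric_borel_def by (simp add: sets_measure_of)
qed

lemma outer_measure_of_countable_subadd:
  assumes "\<And>k. A k \<subseteq> space M"
  shows "outer_measure_of M (\<Union>k. A k) \<le> (\<Sum>k. outer_measure_of M (A k))"
proof -
  have "\<forall>k. \<exists>E\<in>sets M. A k \<subseteq> E \<and> outer_measure_of M (A k) = emeasure M E"
    using outer_measure_of_attain[OF assms] by blast
  then obtain E where E: "\<And>k. E k \<in> sets M" "\<And>k. A k \<subseteq> E k"
    "\<And>k. outer_measure_of M (A k) = emeasure M (E k)"
    by metis
  have "outer_measure_of M (\<Union>k. A k) \<le> outer_measure_of M (\<Union>k. E k)"
    using E(2) by (intro outer_measure_of_mono) blast
  also have "\<dots> = emeasure M (\<Union>k. E k)"
    using E(1) by (intro outer_measure_of_eq) auto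
  also have "\<dots> \<le> (\<Sum>k. emeasure M (E k))"
    using E(1) by (intro emeasure_subadditive_countably) auto
  finally show ?thesis using E(3) by simp
qed

lemma ennreal_suminf_swap:
  fixes f :: "nat \<Rightarrow> nat \<Rightarrow> ennreal"
  shows "(\<Sum>k. \<Sum>i. f k i) = (\<Sum>i. \<Sum>k. f k i)"
proof -
  have "(\<Sum>k. \<Sum>i. f k i) = (\<Sum>k. SUP n. \<Sum>i<n. f k i)"
    by (simp add: suminf_eq_SUP)
  also have "\<dots> = (SUP n. \<Sum>k. \<Sum>i<n. f k i)"
    by (rule ennreal_suminf_SUP_eq) (auto simp: incseq_def intro!: sum_mono2)
  also have "\<dots> = (SUP n. \<Sum>i<n. \<Sum>k. f k i)"
    by (subst suminf_sum) (auto intro: summableI)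
  also have "\<dots> = (\<Sum>i. \<Sum>k. f k i)"
    by (simp add: suminf_eq_SUP[of "\<lambda>i. \<Sum>k. f k i"])
  finally show ?thesis .
qed

lemma greedy_separated:
  assumes "finite P" and sym: "\<And>i j. far i j \<Longrightarrow> far j i"
  shows "\<exists>S\<subseteq>P. (\<forall>i\<in>S. \<forall>j\<in>S. i \<noteq> j \<longrightarrow> far i j) \<and> (\<forall>j\<in>P. j \<in> S \<or> (\<exists>i\<in>S. \<not> far i j))"
  using assms(1)
proof (induction P rule: finite_induct)
  case empty then show ?case by auto
next
  case (insert j P)
  then obtain S where S: "S \<subseteq> P" "\<forall>i\<in>S. \<forall>j\<in>S. i \<noteq> j \<longrightarrow> far i j"
    "\<forall>j\<in>P. j \<in> S \<or> (\<exists>i\<in>S. \<not> far i j)" by blast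
  show ?case
  proof (cases "\<exists>i\<in>S. \<not> far i j")
    case True
    then show ?thesis using S by (intro exI[of _ S]) auto
  next
    case False
    then show ?thesis using S sym by (intro exI[of _ "insert j S"]) auto
  qed
qed



lemma core:
  fixes d :: "'a \<Rightarrow> 'a \<Rightarrow> real" and mu muF :: "'a measure"
    and x y :: "nat \<Rightarrow> 'a" and r :: "nat \<Rightarrow> real"
  assumes met: "Metric_space UNIV d"
   and mu_sets: "sets mu = sets (metric_borel d)"
   and T: "T \<in> sets mu" "emeasure mu T < \<infinity>"
   and muF_sets: "sets muF = sets (restrict_space (metric_borel d) F)"
   and muF_mass: "emeasure muF F = 1"
   and D: "1 \<le> D"
   and doubling: "\<And>z rr. z \<in> F \<Longrightarrow> 0 < rr \<Longrightarrow>
        emeasure muF (F \<inter> cball_d d z (2*rr)) \<le> ennreal D * emeasure muF (F \<inter> cball_d d z rr)"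
   and Kb: "1 \<le> K" "0 < K'" "0 < delta"
   and A2: "\<And>z. z \<in> F \<Longrightarrow> measure muF (F \<inter> cball_d d z (2*delta)) > 0 \<Longrightarrow>
        measure mu (T \<inter> cball_d d z (K*(2*delta)))
          \<ge> K' * measure muF (F \<inter> cball_d d z (2*delta)) * delta powr theta * measure mu T"
   and rJ: "\<And>i. i \<in> J \<Longrightarrow> delta \<le> r i \<and> r i < 2*delta"
   and N: "4*K \<le> 2^N"
   and m: "0 \<le> m" "ennreal m < emeasure muF (F \<inter> (\<Union>i\<in>J. cball_d d (x i) (r i)))"
  shows "\<exists>G\<in>sets mu. G \<subseteq> (\<Union>i\<in>J. cball_d d (x i) ((2*K+1) * r i)) \<and>
           K' * delta powr theta * m / D^N * measure mu T \<le> measure mu (T \<inter> G)"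
proof -
  interpret Metric_space UNIV d by fact
  have spF: "space muF = F"
    using sets_eq_imp_space_eq[OF muF_sets] by (simp add: space_restrict_space)
  have Fc: "F \<inter> cball_d d z s \<in> sets muF" for z s
    unfolding muF_sets sets_restrict_space using cball_metric_borel[OF met] by blast
  have cbmu: "cball_d d z s \<in> sets mu" for z s
    unfolding mu_sets using cball_metric_borel[OF met] .
  interpret FM: finite_measure muF
    by (rule finite_measureI) (simp add: spF muF_mass)
  define A where "A n = (\<Union>i\<in>J\<inter>{..<n}. F \<inter> cball_d d (x i) (r i))" for n
  have Asets: "range A \<subseteq> sets muF" unfolding A_def using Fc by (intro image_subsetI sets.finite_UN) auto
  have Ainc: "incseq A" unfolding A_def incseq_def by auto
  have "(\<Union>n. A n) = F \<inter> (\<Union>i\<in>J. cball_d d (x i) (r i))"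
    unfolding A_def by auto
  then have "ennreal m < (SUP n. emeasure muF (A n))"
    using m(2) SUP_emeasure_incseq[OF Asets Ainc] by simp
  then obtain n where n: "ennreal m < emeasure muF (A n)"
    by (auto simp: less_SUP_iff)
  define P where "P = {i\<in>J\<inter>{..<n}. F \<inter> cball_d d (x i) (r i) \<noteq> {}}"
  have finP: "finite P" unfolding P_def by auto
  have AP: "A n = (\<Union>i\<in>P. F \<inter> cball_d d (x i) (r i))"
    unfolding A_def P_def by auto
  define yy where "yy i = (SOME z. z \<in> F \<inter> cball_d d (x i) (r i))" for i
  have yy: "yy i \<in> F \<and> d (x i) (yy i) \<le> r i" if "i \<in> P" for i
  proof -
    have "\<exists>z. z \<in> F \<inter> cball_d d (x i) (r i)" using that unfolding P_def by blast
    then have "yy i \<in> F \<inter> cball_d d (x i) (r i)" unfolding yy_def by (rule someI_ex)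
    then show ?thesis by (simp add: cball_d_def)
  qed
  define rho where "rho = 2 * delta"
  have rho_pos: "0 < rho" using Kb unfolding rho_def by simp
  define far where "far i j \<longleftrightarrow> 2*K*rho < d (yy i) (yy j)" for i j
  have "\<exists>S\<subseteq>P. (\<forall>i\<in>S. \<forall>j\<in>S. i \<noteq> j \<longrightarrow> far i j) \<and> (\<forall>j\<in>P. j \<in> S \<or> (\<exists>i\<in>S. \<not> far i j))"
    proof (rule greedy_separated[OF finP])
    fix i j assume "far i j" then show "far j i" unfolding far_def using commute[of "yy i" "yy j"] by simp
  qed
  then obtain S where S1: "S \<subseteq> P" and S2: "\<forall>i\<in>S. \<forall>j\<in>S. i \<noteq> j \<longrightarrow> far i j"
    and S3: "\<forall>j\<in>P. j \<in> S \<or> (\<exists>i\<in>S. \<not> far i j)" by (elim exE conjE)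
  have S: "S \<subseteq> P" "\<And>i j. i \<in> S \<Longrightarrow> j \<in> S \<Longrightarrow> i \<noteq> j \<Longrightarrow> far i j"
    "\<And>j. j \<in> P \<Longrightarrow> j \<in> S \<or> (\<exists>i\<in>S. \<not> far i j)"
    using S1 S2 S3 by auto
  have finS: "finite S" using finP S(1) finite_subset by blast
  have near: "\<exists>i\<in>S. d (yy i) (yy j) \<le> 2*K*rho" if "j \<in> P" for j
  proof (cases "j \<in> S")
    case True
    have "0 \<le> 2*K*rho" using Kb rho_pos by simp
    then show ?thesis using True by (intro bexI[of _ j]) auto
  next
    case False
    then show ?thesis using S(3)[OF that] unfolding far_def by (meson not_less)
  qed
  have cover: "A n \<subseteq> (\<Union>i\<in>S. F \<inter> cball_d d (yy i) (2^N * rho))"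
  proof
    fix z assume "z \<in> A n"
    then obtain j where j1: "j \<in> P" and "z \<in> F \<inter> cball_d d (x j) (r j)"
      unfolding AP by blast
    then have j2: "z \<in> F" and j3: "d (x j) z \<le> r j" by (auto simp: cball_d_def)
    obtain i where i1: "i \<in> S" and i2: "d (yy i) (yy j) \<le> 2*K*rho" using near[OF j1] by blast
    have jJ: "j \<in> J" using j1 unfolding P_def by auto
    have t1: "d (yy i) z \<le> d (yy i) (yy j) + d (yy j) z" by (rule triangle) auto
    have t2: "d (yy j) z \<le> d (yy j) (x j) + d (x j) z" by (rule triangle) auto
    have e1: "d (yy j) (x j) = d (x j) (yy j)" by (rule commute)
    have y1: "d (x j) (yy j) \<le> r j" using yy[OF j1] by blast
    have r1: "r j < 2*delta" using rJ[OF jJ] by blast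
    have k1: "2*rho \<le> 2*K*rho" using Kb rho_pos by simp
    have k2: "4*K*rho \<le> 2^N * rho" using N rho_pos by simp
    have "d (yy i) z \<le> 2^N * rho"
      using t1 t2 e1 y1 r1 k1 k2 i2 j3 unfolding rho_def by linarith
    then show "z \<in> (\<Union>i\<in>S. F \<inter> cball_d d (yy i) (2^N * rho))"
      using i1 j2 by (auto simp: cball_d_def)
  qed
  have dbl: "emeasure muF (F \<inter> cball_d d z (2^k * s)) \<le> ennreal (D^k) * emeasure muF (F \<inter> cball_d d z s)"
    if "z \<in> F" "0 < s" for z s k
  proof (induction k)
    case 0 then show ?case by simp
  next
    case (Suc k)
    have "emeasure muF (F \<inter> cball_d d z (2^Suc k * s)) = emeasure muF (F \<inter> cball_d d z (2*(2^k * s)))"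
      by (simp add: mult.assoc)
    also have "\<dots> \<le> ennreal D * emeasure muF (F \<inter> cball_d d z (2^k * s))"
      using doubling[OF that(1)] that(2) by simp
    also have "\<dots> \<le> ennreal D * (ennreal (D^k) * emeasure muF (F \<inter> cball_d d z s))"
      by (intro mult_left_mono Suc) auto
    also have "\<dots> = ennreal (D^Suc k) * emeasure muF (F \<inter> cball_d d z s)"
    proof -
      have "ennreal (D^Suc k) = ennreal D * ennreal (D^k)"
        using D by (simp add: ennreal_mult)
      then show ?thesis by (simp add: mult.assoc)
    qed
    finally show ?case .
  qed
  define M where "M i = measure muF (F \<inter> cball_d d (yy i) rho)" for i
  have M0: "0 \<le> M i" for i unfolding M_def by simp
  have Us: "(\<Union>i\<in>S. F \<inter> cball_d d (yy i) (2^N * rho)) \<in> sets muF"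
    using Fc finS by (intro sets.finite_UN) auto
  have sub1: "emeasure muF (A n) \<le> emeasure muF (\<Union>i\<in>S. F \<inter> cball_d d (yy i) (2^N * rho))"
    by (rule emeasure_mono[OF cover Us])
  have st1: "ennreal m < emeasure muF (\<Union>i\<in>S. F \<inter> cball_d d (yy i) (2^N * rho))"
    using n sub1 by (rule order_less_le_trans)
  have st2: "emeasure muF (\<Union>i\<in>S. F \<inter> cball_d d (yy i) (2^N * rho))
      \<le> (\<Sum>i\<in>S. emeasure muF (F \<inter> cball_d d (yy i) (2^N * rho)))"
    by (rule emeasure_subadditive_finite[OF finS]) (use Fc in blast)
  have st3: "(\<Sum>i\<in>S. emeasure muF (F \<inter> cball_d d (yy i) (2^N * rho)))
      \<le> (\<Sum>i\<in>S. ennreal (D^N) * emeasure muF (F \<inter> cball_d d (yy i) rho))"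
  proof (rule sum_mono)
    fix i assume "i \<in> S"
    then have "yy i \<in> F" using S(1) yy by blast
    then show "emeasure muF (F \<inter> cball_d d (yy i) (2^N * rho))
      \<le> ennreal (D^N) * emeasure muF (F \<inter> cball_d d (yy i) rho)"
      by (rule dbl[OF _ rho_pos])
  qed
  have "ennreal m < (\<Sum>i\<in>S. ennreal (D^N) * emeasure muF (F \<inter> cball_d d (yy i) rho))"
    using order_less_le_trans[OF order_less_le_trans[OF st1 st2] st3] .
  also have "\<dots> = (\<Sum>i\<in>S. ennreal (D^N * M i))"
  proof (intro sum.cong refl)
    fix i
    have "emeasure muF (F \<inter> cball_d d (yy i) rho) = ennreal (M i)"
      unfolding M_def by (rule FM.emeasure_eq_measure)
    moreover have "ennreal (D^N * M i) = ennreal (D^N) * ennreal (M i)"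
      using D M0[of i] by (intro ennreal_mult) auto
    ultimately show "ennreal (D^N) * emeasure muF (F \<inter> cball_d d (yy i) rho) = ennreal (D^N * M i)"
      by simp
  qed
  also have "\<dots> = ennreal (\<Sum>i\<in>S. D^N * M i)"
    using D M0 by (intro sum_ennreal) auto
  finally have mlt: "m < (\<Sum>i\<in>S. D^N * M i)"
    using ennreal_less_iff[OF m(1)] by blast
  define G where "G = (\<Union>i\<in>S. cball_d d (yy i) (K * rho))"
  have Gs: "G \<in> sets mu" unfolding G_def using cbmu finS by auto
  have lowA2: "K' * M i * delta powr theta * measure mu T \<le> measure mu (T \<inter> cball_d d (yy i) (K * rho))"
    if "i \<in> S" for i
  proof (cases "M i > 0")
    case True
    have yiF: "yy i \<in> F" using S(1) yy that by blast
    have "measure muF (F \<inter> cball_d d (yy i) (2*delta)) > 0" using True by (simp add: M_def rho_def)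
    from A2[OF yiF this] show ?thesis by (simp add: M_def rho_def)
  next
    case False
    then have "M i = 0" using M0[of i] by simp
    then show ?thesis by simp
  qed
  have disj: "disjoint_family_on (\<lambda>i. T \<inter> cball_d d (yy i) (K * rho)) S"
    unfolding disjoint_family_on_def
  proof (intro ballI impI)
    fix i j assume ij: "i \<in> S" "j \<in> S" "i \<noteq> j"
    show "T \<inter> cball_d d (yy i) (K * rho) \<inter> (T \<inter> cball_d d (yy j) (K * rho)) = {}"
    proof (rule ccontr)
      assume "T \<inter> cball_d d (yy i) (K * rho) \<inter> (T \<inter> cball_d d (yy j) (K * rho)) \<noteq> {}"
      then obtain z where "z \<in> cball_d d (yy i) (K*rho)" "z \<in> cball_d d (yy j) (K*rho)"
        by blast
      then have z1: "d (yy i) z \<le> K*rho" and z2: "d (yy j) z \<le> K*rho"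
        unfolding cball_d_def by simp_all
      have t: "d (yy i) (yy j) \<le> d (yy i) z + d z (yy j)" by (rule triangle) auto
      have c: "d z (yy j) = d (yy j) z" by (rule commute)
      have "\<not> 2*K*rho < d (yy i) (yy j)" using t c z1 z2 by linarith
      then show False using S(2)[OF ij] unfolding far_def by blast
    qed
  qed
  have eqTG: "T \<inter> G = (\<Union>i\<in>S. T \<inter> cball_d d (yy i) (K * rho))" unfolding G_def by blast
  have mU: "measure mu (\<Union>i\<in>S. T \<inter> cball_d d (yy i) (K * rho))
      = (\<Sum>i\<in>S. measure mu (T \<inter> cball_d d (yy i) (K * rho)))"
  proof (rule measure_finite_Union[OF finS])
    show "(\<lambda>i. T \<inter> cball_d d (yy i) (K * rho)) ` S \<subseteq> sets mu" using T(1) cbmu by blast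
    show "disjoint_family_on (\<lambda>i. T \<inter> cball_d d (yy i) (K * rho)) S" by (rule disj)
    fix i
    have "emeasure mu (T \<inter> cball_d d (yy i) (K * rho)) \<le> emeasure mu T"
      by (rule emeasure_mono) (use T(1) in auto)
    then show "emeasure mu (T \<inter> cball_d d (yy i) (K * rho)) \<noteq> \<infinity>"
      using T(2) by (metis infinity_ennreal_def neq_top_trans top.not_eq_extremum)
  qed
  have s1: "(\<Sum>i\<in>S. K' * M i * delta powr theta * measure mu T) \<le> (\<Sum>i\<in>S. measure mu (T \<inter> cball_d d (yy i) (K * rho)))"
    by (intro sum_mono lowA2)
  have s2: "(\<Sum>i\<in>S. K' * M i * delta powr theta * measure mu T) = K' * delta powr theta * measure mu T * (\<Sum>i\<in>S. M i)"
  proof -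
    have "(\<Sum>i\<in>S. K' * M i * delta powr theta * measure mu T) = (\<Sum>i\<in>S. M i * (K' * delta powr theta * measure mu T))"
      by (intro sum.cong refl) (simp add: ac_simps)
    also have "\<dots> = (\<Sum>i\<in>S. M i) * (K' * delta powr theta * measure mu T)"
      by (rule sum_distrib_right[symmetric])
    finally show ?thesis by (simp add: ac_simps)
  qed
  have lowG: "K' * delta powr theta * measure mu T * (\<Sum>i\<in>S. M i) \<le> measure mu (T \<inter> G)"
    using s1 s2 mU eqTG by simp
  have "K' * delta powr theta * m / D^N * measure mu T \<le> K' * delta powr theta * measure mu T * (\<Sum>i\<in>S. M i)"
  proof -
    have Dp: "0 < D^N" using D by simp
    have e: "(\<Sum>i\<in>S. D^N * M i) = D^N * (\<Sum>i\<in>S. M i)" by (rule sum_distrib_left[symmetric])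
    have "m \<le> (\<Sum>i\<in>S. M i) * D^N" using mlt e by (metis less_imp_le mult.commute)
    then have md: "m / D^N \<le> (\<Sum>i\<in>S. M i)" using pos_divide_le_eq[OF Dp] by blast
    have X0: "0 \<le> K' * delta powr theta * measure mu T" using Kb by simp
    have "(K' * delta powr theta * measure mu T) * (m / D^N) \<le> (K' * delta powr theta * measure mu T) * (\<Sum>i\<in>S. M i)"
      using mult_left_mono[OF md X0] .
    moreover have "K' * delta powr theta * m / D^N * measure mu T = (K' * delta powr theta * measure mu T) * (m / D^N)"
      by simp
    ultimately show ?thesis by (simp only:)
  qed
  moreover have "G \<subseteq> (\<Union>i\<in>J. cball_d d (x i) ((2*K+1) * r i))"
  proof
    fix z assume "z \<in> G"
    then obtain i where i: "i \<in> S" "d (yy i) z \<le> K*rho" unfolding G_def by (auto simp: cball_d_def)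
    have iP: "i \<in> P" using i(1) S(1) by auto
    have iJ: "i \<in> J" using iP unfolding P_def by auto
    have "d (x i) z \<le> d (x i) (yy i) + d (yy i) z" by (rule triangle) auto
    also have "\<dots> \<le> r i + K * rho" using yy[OF iP] i(2) by simp
    also have "\<dots> \<le> r i + K * (2 * r i)" using rJ[OF iJ] Kb unfolding rho_def by simp
    also have "\<dots> = (2*K+1) * r i" by (simp add: algebra_simps)
    finally show "z \<in> (\<Union>i\<in>J. cball_d d (x i) ((2*K+1) * r i))" using iJ by (auto simp: cball_d_def)
  qed
  ultimately show ?thesis using Gs lowG by (intro bexI[of _ G]) auto
qed



lemma maxlow:
  assumes aP: "a \<in> Par" and T: "T = tube d I delta u a" "T \<in> sets mu" "emeasure mu T < \<infinity>"
    and G: "G \<in> sets mu" "G \<subseteq> E"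
  shows "ennreal (measure mu (T \<inter> G) / measure mu T) \<le> kakeya_maximal mu d Par I (indicator E) delta u"
  unfolding kakeya_maximal_def
proof (rule SUP_upper2[OF aP])
  have TG: "T \<inter> G \<in> sets mu" using T G by auto
  have fin: "emeasure mu (T \<inter> G) < \<infinity>"
    using T(3) emeasure_mono[of "T \<inter> G" T mu] T(2) by (meson inf_le1 order_le_less_trans)
  have "ennreal (measure mu (T \<inter> G)) = emeasure mu (T \<inter> G)"
  proof -
    have "emeasure mu (T \<inter> G) \<noteq> \<infinity>" using fin by simp
    then show ?thesis by (simp add: emeasure_eq_ennreal_measure)
  qed
  also have "\<dots> = emeasure (completion mu) (T \<inter> G)"
    using TG by (simp add: main_part)
  also have "\<dots> = (\<integral>\<^sup>+ x. indicator (T \<inter> G) x \<partial>completion mu)"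
    using TG by simp
  also have "\<dots> \<le> (\<integral>\<^sup>+ x. ennreal \<bar>indicator E x\<bar> * indicator T x \<partial>completion mu)"
    by (intro nn_integral_mono) (use G(2) in \<open>auto simp: indicator_def\<close>)
  finally have I: "ennreal (measure mu (T \<inter> G)) \<le> (\<integral>\<^sup>+ x. ennreal \<bar>indicator E x :: real\<bar> * indicator T x \<partial>completion mu)" .
  have "ennreal (measure mu (T \<inter> G) / measure mu T) = ennreal (1 / measure mu T) * ennreal (measure mu (T \<inter> G))"
    by (simp add: ennreal_mult[symmetric])
  also have "\<dots> \<le> ennreal (1 / measure mu T) * (\<integral>\<^sup>+ x. ennreal \<bar>indicator E x :: real\<bar> * indicator T x \<partial>completion mu)"
    by (intro mult_left_mono I) auto
  finally show "ennreal (measure mu (T \<inter> G) / measure mu T) \<le> ennreal (1 / measure mu (tube d I delta u a)) *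
      (\<integral>\<^sup>+ x. ennreal \<bar>indicator E x :: real\<bar> * indicator (tube d I delta u a) x \<partial>completion mu)"
    using T(1) by simp
qed

lemma powr_key:
  fixes delta r theta beta gamma p Q s :: real
  assumes "0 < delta" "delta \<le> r" "r \<le> 2*delta" "0 \<le> theta" "0 \<le> beta" "0 < p" "0 \<le> gamma"
    and QS: "Q - s = (theta+beta)*p + gamma*p"
  shows "(delta powr theta * (2*delta) powr gamma) powr (-p) * delta powr (-beta*p) * r powr Q
          \<le> 2 powr ((theta+beta)*p) * r powr s"
proof -
  define a where "a = (theta+beta)*p"
  define g where "g = gamma*p"
  have a0: "0 \<le> a" "0 \<le> g" using assms unfolding a_def g_def by auto
  have r0: "0 < r" using assms by linarith
  have dd: "0 < 2*delta" using assms by simp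
  have 1: "(delta powr theta * (2*delta) powr gamma) powr (-p) = delta powr (-theta*p) * (2*delta) powr (-g)"
    using assms unfolding g_def by (simp add: powr_mult powr_powr)
  have 2: "r powr Q = r powr s * r powr a * r powr g"
  proof -
    have "Q = s + a + g" using QS unfolding a_def g_def by (simp add: algebra_simps)
    then show ?thesis by (simp add: powr_add)
  qed
  have 3: "r powr a \<le> (2*delta) powr a" using a0 r0 assms by (intro powr_mono2) auto
  have 4: "r powr g \<le> (2*delta) powr g" using a0 r0 assms by (intro powr_mono2) auto
  have 5: "(2*delta) powr a = 2 powr a * delta powr a" using assms by (simp add: powr_mult)
  have 6: "delta powr (-theta*p) * delta powr (-beta*p) = delta powr (-a)"
    unfolding a_def by (simp add: powr_add[symmetric] algebra_simps)
  have 7: "delta powr (-a) * delta powr a = 1" using assms by (simp add: powr_add[symmetric])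
  have 8: "(2*delta) powr (-g) * (2*delta) powr g = 1" using dd by (simp add: powr_add[symmetric])
  have "(delta powr theta * (2*delta) powr gamma) powr (-p) * delta powr (-beta*p) * r powr Q
      = (delta powr (-a) * (2*delta) powr (-g) * r powr s) * (r powr a * r powr g)"
    using 1 2 6 by (simp add: ac_simps)
  also have "\<dots> \<le> (delta powr (-a) * (2*delta) powr (-g) * r powr s) * ((2*delta) powr a * (2*delta) powr g)"
    by (intro mult_left_mono mult_mono 3 4) auto
  also have "\<dots> = 2 powr a * r powr s * (delta powr (-a) * delta powr a) * ((2*delta) powr (-g) * (2*delta) powr g)"
    using 5 by (simp add: ac_simps)
  also have "\<dots> = 2 powr a * r powr s" using 7 8 by simp
  finally show ?thesis unfolding a_def .
qed



lemma bucket_exists: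
  fixes r :: real
  assumes "0 < r" "r < 1"
  shows "\<exists>k::nat. (1/2)^Suc k \<le> r \<and> r < 2*(1/2)^Suc k"
proof -
  obtain n where n: "(1/2::real)^n < r" using real_arch_pow_inv[OF assms(1), of "1/2"] by auto
  define n0 where "n0 = (LEAST n. (1/2::real)^n \<le> r)"
  have n0: "(1/2::real)^n0 \<le> r" unfolding n0_def by (rule LeastI[of _ n]) (use n in simp)
  have "n0 \<noteq> 0"
  proof
    assume "n0 = 0" then show False using n0 assms(2) by simp
  qed
  then obtain k where k: "n0 = Suc k" by (cases n0) auto
  have "\<not> (1/2::real)^k \<le> r"
  proof
    assume "(1/2::real)^k \<le> r"
    then have "n0 \<le> k" unfolding n0_def by (rule Least_le)
    then show False using k by simp
  qed
  then have "r < 2*(1/2::real)^Suc k" by simp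
  then show ?thesis using n0 k by blast
qed

lemma bucket_unique:
  fixes r :: real
  assumes "(1/2)^Suc k \<le> r" "r < 2*(1/2)^Suc k" "(1/2)^Suc k' \<le> r" "r < 2*(1/2)^Suc k'"
  shows "k = k'"
proof (rule ccontr)
  assume "k \<noteq> k'"
  then consider "k < k'" | "k' < k" by linarith
  then show False
  proof cases
    case 1
    then have "(1/2::real)^k' \<le> (1/2)^Suc k" by (intro power_decreasing) auto
    then show False using assms by simp
  next
    case 2
    then have "(1/2::real)^k \<le> (1/2)^Suc k'" by (intro power_decreasing) auto
    then show False using assms by simp
  qed
qed



theorem mainTheorem3:
  fixes d d' :: "'a \<Rightarrow> 'a \<Rightarrow> real"
    and mu :: "'a measure"
    and dZ :: "'z \<Rightarrow> 'z \<Rightarrow> real"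
    and Y :: "'z set"
    and nu :: "'z measure"
    and Par :: "'p set"
    and F I It :: "'z \<Rightarrow> 'p \<Rightarrow> 'a set"
    and muF :: "'z \<Rightarrow> 'p \<Rightarrow> 'a measure"
    and Q C0 S c0t C0t c c' cbar Cdb T c1 c2 W theta K' K b Nbar p beta Cpb :: real
  assumes
    \<comment> \<open>(X,d): complete separable metric space with upper Q-regular Borel measure mu\<close>
    d_metric: "Metric_space UNIV d"
    and d_complete: "Metric_space.mcomplete UNIV d"
    and d_separable: "separable_space (Metric_space.mtopology UNIV d)"
    and mu_borel: "sets mu = sets (metric_borel d)"
    and Q_gt: "Q > 1/2" and C0_pos: "0 < C0"
    and mu_upper: "\<And>x r. 0 < r \<Longrightarrow> ennreal r < ediam d UNIV \<Longrightarrow>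
                        emeasure mu (cball_d d x r) \<le> ennreal (C0 * r powr Q)"
    \<comment> \<open>second metric d', separable\<close>
    and d'_metric: "Metric_space UNIV d'"
    and d'_separable: "separable_space (Metric_space.mtopology UNIV d')"
    \<comment> \<open>(Z,dZ), compact Y, measure nu, S-regular on Y\<close>
    and dZ_metric: "Metric_space UNIV dZ"
    and Y_compact: "compactin (Metric_space.mtopology UNIV dZ) Y"
    and nu_borel: "sets nu = sets (metric_borel dZ)"
    and nu_Y: "0 < emeasure nu Y" "emeasure nu Y \<le> 1"
    and S_bounds: "1 \<le> S" "S < 2 * Q"
    and c0t_C0t: "0 < c0t" "c0t \<le> C0t"
    and nu_regular: "\<And>u r. u \<in> Y \<Longrightarrow> 0 < r \<Longrightarrow> ennreal r < ediam dZ Y \<Longrightarrow>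
          ennreal (c0t * r powr S) \<le> emeasure nu (cball_d dZ u r) \<and>
          emeasure nu (cball_d dZ u r) \<le> ennreal (C0t * r powr S)"
    \<comment> \<open>the sets F, I, tilde I and the measures mu_{u,a}\<close>
    and c_bounds: "0 < c" "c \<le> c'" "1 \<le> cbar"
    and FI: "\<And>u a. u \<in> Y \<Longrightarrow> a \<in> Par \<Longrightarrow> F u a \<subseteq> I u a \<and> I u a \<subseteq> It u a"
    and diam_I: "\<And>u a. u \<in> Y \<Longrightarrow> a \<in> Par \<Longrightarrow>
          ennreal c \<le> ediam d' (I u a) \<and> ediam d' (I u a) \<le> ennreal c'"
    and diam_It: "\<And>u a. u \<in> Y \<Longrightarrow> a \<in> Par \<Longrightarrow>
          ediam d' (It u a) \<le> ennreal cbar * ediam d' (I u a)"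
    and muF_sets: "\<And>u a. u \<in> Y \<Longrightarrow> a \<in> Par \<Longrightarrow>
          sets (muF u a) = sets (restrict_space (metric_borel d) (F u a))"
    and muF_mass: "\<And>u a. u \<in> Y \<Longrightarrow> a \<in> Par \<Longrightarrow> emeasure (muF u a) (F u a) = 1"
    and muF_doubling: "\<And>u a x r. u \<in> Y \<Longrightarrow> a \<in> Par \<Longrightarrow> x \<in> F u a \<Longrightarrow> 0 < r \<Longrightarrow>
          emeasure (muF u a) (F u a \<inter> cball_d d x (2 * r))
            \<le> ennreal Cdb * emeasure (muF u a) (F u a \<inter> cball_d d x r)"
    \<comment> \<open>(A1)\<close>
    and A1_cont: "\<And>a delta. a \<in> Par \<Longrightarrow> 0 < delta \<Longrightarrow> delta < 1 \<Longrightarrow>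
          continuous_map (subtopology (Metric_space.mtopology UNIV dZ) Y) euclideanreal
            (\<lambda>u. measure mu (tube d I delta u a))"
    and A1_T: "S / 2 < T" "T < Q" and A1_c: "0 < c1" "c1 \<le> c2"
    and A1_bounds: "\<And>u a delta. u \<in> Y \<Longrightarrow> a \<in> Par \<Longrightarrow> 0 < delta \<Longrightarrow> delta < 1 \<Longrightarrow>
          ennreal (c1 * delta powr T) \<le> emeasure mu (tube d I delta u a) \<and>
          emeasure mu (tube d I delta u a) \<le> emeasure mu (tube d It (W * delta) u a) \<and>
          emeasure mu (tube d It (W * delta) u a) \<le> ennreal (c2 * delta powr T)"
    and A1_diam: "\<And>u a delta A. u \<in> Y \<Longrightarrow> a \<in> Par \<Longrightarrow> 0 < delta \<Longrightarrow> delta < 1 \<Longrightarrow>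
          A \<subseteq> tube d It (W * delta) u a \<Longrightarrow>
          outer_measure_of mu A \<le> ennreal c2 * ediam d' A * ennreal (delta powr T)"
    \<comment> \<open>(A2)\<close>
    and A2_theta: "0 \<le> theta" "theta < (2 * Q - 2 * T + S) / (S + 2)"
    and A2_K: "0 < K'" "1 \<le> K"
    and A2: "\<And>u a x delta r. u \<in> Y \<Longrightarrow> a \<in> Par \<Longrightarrow> x \<in> F u a \<Longrightarrow>
          0 < delta \<Longrightarrow> delta < 1 \<Longrightarrow> delta \<le> r \<Longrightarrow> r \<le> 2 * delta \<Longrightarrow>
          measure (muF u a) (F u a \<inter> cball_d d x r) > 0 \<Longrightarrow>
          measure mu (tube d I delta u a \<inter> cball_d d x (K * r))
            \<ge> K' * measure (muF u a) (F u a \<inter> cball_d d x r) * delta powr theta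
                 * measure mu (tube d I delta u a)"
    \<comment> \<open>(A3)\<close>
    and A3_b: "0 < b"
    and A3: "\<And>u v a a' delta. u \<in> Y \<Longrightarrow> v \<in> Y \<Longrightarrow> u \<noteq> v \<Longrightarrow> a \<in> Par \<Longrightarrow> a' \<in> Par \<Longrightarrow>
          0 < delta \<Longrightarrow> delta < 1 \<Longrightarrow>
          ediam d' (tube d It (W * delta) u a \<inter> tube d It (W * delta) v a')
            \<le> ennreal (b * delta / dZ u v)"
    \<comment> \<open>(A4)\<close>
    and A4_W: "0 < W" "0 < Nbar"
    and A4: "\<And>u v a delta. u \<in> Y \<Longrightarrow> v \<in> Y \<Longrightarrow> a \<in> Par \<Longrightarrow> 0 < delta \<Longrightarrow> delta < 1 \<Longrightarrow>
          dZ u v \<le> delta \<Longrightarrow>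
          \<exists>Bs. finite Bs \<and> Bs \<subseteq> Par \<and> real (card Bs) \<le> Nbar \<and>
               tube d I delta u a \<subseteq> (\<Union>b'\<in>Bs. tube d It (W * delta) v b')"
    \<comment> \<open>the maximal function estimate\<close>
    and p_beta: "1 \<le> p" "0 < beta" "Q - (beta + theta) * p > 0" "0 < Cpb"
    and maximal_est: "\<And>E lam delta. E \<in> sets (completion mu) \<Longrightarrow> 0 < lam \<Longrightarrow>
          0 < delta \<Longrightarrow> delta < 1 \<Longrightarrow>
          outer_measure_of nu {u \<in> Y. kakeya_maximal mu d Par I (indicator E) delta u > ennreal lam}
            \<le> ennreal (Cpb * lam powr (- p) * delta powr (- beta * p)) * emeasure (completion mu) E"
  shows "\<forall>B. generalized_kakeya mu Y Par F B \<longrightarrow>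
           hausdorff_dim d B \<ge> ereal (Q - (beta + theta) * p)"
proof (intro allI impI)
  fix B assume gk: "generalized_kakeya mu Y Par F B"
  have Bnull: "B \<in> null_sets (completion mu)" and Bcov: "\<forall>u\<in>Y. \<exists>a\<in>Par. F u a \<subseteq> B"
    using gk unfolding generalized_kakeya_def by auto
  interpret Md: Metric_space UNIV d by (rule d_metric)
  have spnu: "space nu = UNIV" using sets_eq_imp_space_eq[OF nu_borel] by simp
  have Ysets: "Y \<in> sets nu" using nu_Y(1) emeasure_notin_sets by fastforce
  have Yne: "Y \<noteq> {}" using nu_Y(1) by auto
  obtain aa where aa: "\<And>u. u \<in> Y \<Longrightarrow> aa u \<in> Par \<and> F u (aa u) \<subseteq> B"
    using Bcov by metis
  have cbmu: "cball_d d z rr \<in> sets mu" for z rr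
    unfolding mu_borel using cball_metric_borel[OF d_metric] .
  have tube_facts: "tube d I delta u a \<in> sets mu \<and> emeasure mu (tube d I delta u a) < \<infinity>
       \<and> 0 < measure mu (tube d I delta u a)"
    if "u \<in> Y" "a \<in> Par" "0 < delta" "delta < 1" for u a delta
  proof -
    have l: "ennreal (c1 * delta powr T) \<le> emeasure mu (tube d I delta u a)"
     and up: "emeasure mu (tube d I delta u a) \<le> emeasure mu (tube d It (W * delta) u a)"
     and up2: "emeasure mu (tube d It (W * delta) u a) \<le> ennreal (c2 * delta powr T)"
      using A1_bounds[OF that] by auto
    have pos: "0 < c1 * delta powr T" using A1_c that by simp
    then have epos: "0 < emeasure mu (tube d I delta u a)"
      using l by (metis ennreal_less_zero_iff order_less_le_trans)
    then have ins: "tube d I delta u a \<in> sets mu" using emeasure_notin_sets by fastforce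
    have fin: "emeasure mu (tube d I delta u a) < \<infinity>"
      using up up2 by (metis ennreal_less_top order_le_less_trans infinity_ennreal_def)
    have "0 < measure mu (tube d I delta u a)"
      using epos fin by (simp add: measure_def enn2real_positive_iff)
    then show ?thesis using ins fin by simp
  qed
  obtain u0 where u0: "u0 \<in> Y" using Yne by blast
  have a0: "aa u0 \<in> Par" "F u0 (aa u0) \<subseteq> B" using aa[OF u0] by auto
  have "F u0 (aa u0) \<noteq> {}" using muF_mass[OF u0 a0(1)] by auto
  then obtain x0 where x0: "x0 \<in> B" using a0(2) by blast
  have "\<exists>y. y \<noteq> x0"
  proof (rule ccontr)
    assume "\<not> (\<exists>y. y \<noteq> x0)"
    then have sub: "tube d I (1/2) u0 (aa u0) \<subseteq> B" using x0 by auto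
    have tf: "tube d I (1/2) u0 (aa u0) \<in> sets mu" "0 < measure mu (tube d I (1/2) u0 (aa u0))"
      using tube_facts[OF u0 a0(1), of "1/2"] by auto
    have Bs: "B \<in> sets (completion mu)" "emeasure (completion mu) B = 0"
      using Bnull by (auto simp: null_sets_def)
    have "emeasure mu (tube d I (1/2) u0 (aa u0)) = emeasure (completion mu) (tube d I (1/2) u0 (aa u0))"
      using tf(1) by (simp add: main_part)
    also have "\<dots> \<le> emeasure (completion mu) B" by (rule emeasure_mono[OF sub Bs(1)])
    finally have "emeasure mu (tube d I (1/2) u0 (aa u0)) = 0" using Bs(2) by simp
    then show False using tf(2) by (simp add: measure_def)
  qed
  then obtain y0 where y0: "y0 \<noteq> x0" by blast
  define L where "L = d x0 y0"
  have Lpos: "0 < L" unfolding L_def using y0 Md.mdist_pos_less by auto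
  have Ldiam: "ennreal L \<le> ediam d UNIV"
    unfolding ediam_def L_def by (intro SUP_upper2[of x0] SUP_upper2[of y0]) auto
  show "hausdorff_dim d B \<ge> ereal (Q - (beta + theta) * p)"
    unfolding hausdorff_dim_def
  proof (rule Inf_greatest)
    fix e assume "e \<in> ereal ` {s. 0 < s \<and> hausdorff_measure d s B = 0}"
    then obtain s where s0: "0 < s" and sH: "hausdorff_measure d s B = 0" and e: "e = ereal s" by auto
    show "ereal (Q - (beta + theta) * p) \<le> e"
    proof (rule ccontr)
      assume "\<not> ereal (Q - (beta + theta) * p) \<le> e"
      then have slt: "s < Q - (beta + theta) * p" using e by simp
      define D where "D = max Cdb 1"
      have D1: "1 \<le> D" unfolding D_def by simp
      obtain N :: nat where N: "4*K < 2^N" using real_arch_pow[of 2 "4*K"] by auto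
      define R where "R = 2*K+1"
      have Rpos: "0 < R" using A2_K unfolding R_def by simp
      define eps0 where "eps0 = min (1/2) (L/(2*R))"
      have eps0: "0 < eps0" "eps0 \<le> 1/2" "R * eps0 < L"
      proof -
        show "0 < eps0" using Lpos Rpos unfolding eps0_def by simp
        show "eps0 \<le> 1/2" unfolding eps0_def by simp
        have "R * eps0 \<le> R * (L/(2*R))" using Rpos unfolding eps0_def by (intro mult_left_mono) auto
        also have "\<dots> = L/2" using Rpos by simp
        finally show "R * eps0 < L" using Lpos by simp
      qed
      define gam where "gam = (Q - (beta+theta)*p - s) / p"
      have p0: "0 < p" using p_beta by simp
      have gam: "0 < gam" using slt p0 unfolding gam_def by simp
      have gp: "gam * p = Q - (beta+theta)*p - s" using p0 unfolding gam_def by simp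
      define q where "q = (1/2::real) powr gam"
      have q: "0 < q" "q < 1" unfolding q_def using gam by (auto simp: powr01_less_one)
      define mm where "mm k = (1-q)/2 * q^k" for k :: nat
      define dk where "dk k = (1/2::real)^Suc k" for k :: nat
      have dk: "0 < dk k" "dk k < 1" "dk k \<le> 1/2" for k
      proof -
        show "0 < dk k" unfolding dk_def by simp
        have "(1/2::real)^Suc k \<le> (1/2)^1" by (intro power_decreasing) auto
        then show "dk k \<le> 1/2" unfolding dk_def by simp
        then show "dk k < 1" by simp
      qed
      have qk: "q^k = (2 * dk k) powr gam" for k
      proof -
        have "2 * dk k = (1/2::real)^k" unfolding dk_def by simp
        also have "\<dots> = (1/2) powr (real k)" by (simp add: powr_realpow)
        finally have "(2 * dk k) powr gam = (1/2) powr (real k * gam)" by (simp add: powr_powr)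
        moreover have "q^k = (1/2) powr (real k * gam)" unfolding q_def by (simp add: powr_power)
        ultimately show ?thesis by simp
      qed
      have mm0: "0 \<le> mm k" for k unfolding mm_def using q by simp
      have summm: "(\<Sum>k. ennreal (mm k)) = ennreal (1/2)"
      proof -
        have "(\<lambda>k. q^k) sums (1/(1-q))" using q by (intro geometric_sums) simp
        then have "(\<lambda>k. (1-q)/2 * q^k) sums ((1-q)/2 * (1/(1-q)))" by (rule sums_mult)
        moreover have eq: "(1-q)/2 * (1/(1-q)) = 1/2" using q by simp
        ultimately have "(\<lambda>k. (1-q)/2 * q^k) sums (1/2)" by (simp only: eq)
        then have "mm sums (1/2)" unfolding mm_def .
        then show ?thesis using mm0 by (rule suminf_ennreal_eq[rotated])
      qed
      define lam where "lam k = K' * dk k powr theta * mm k / (2 * D^N)" for k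
      define kap where "kap = K' * (1-q) / (4 * D^N)"
      have kap: "0 < kap" unfolding kap_def using A2_K q D1 by simp
      have lam_eq: "lam k = kap * (dk k powr theta * (2*dk k) powr gam)" for k
        unfolding lam_def kap_def mm_def qk by (simp add: field_simps)
      have lam_pos: "0 < lam k" for k
        unfolding lam_eq using kap dk(1)[of k] by simp
      define Acon where "Acon = Cpb * kap powr (-p) * C0 * R powr Q * 2 powr ((theta+beta)*p)"
      have Acon: "0 < Acon" unfolding Acon_def using p_beta C0_pos kap Rpos by simp
      define y0' where "y0' = enn2real (emeasure nu Y)"
      have nuY: "emeasure nu Y = ennreal y0'" "0 < y0'"
      proof -
        have "emeasure nu Y < top" using nu_Y(2) by (rule order_le_less_trans) simp
        then have "emeasure nu Y \<noteq> \<infinity>" by simp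
        then show "emeasure nu Y = ennreal y0'" unfolding y0'_def by (simp add: ennreal_enn2real_if)
        then show "0 < y0'" using nu_Y(1) by simp
      qed
      define eps where "eps = y0' / (4 * Acon)"
      have eps: "0 < eps" unfolding eps_def using nuY Acon by simp
      have "hausdorff_pre d s eps0 B \<le> hausdorff_measure d s B"
        unfolding hausdorff_measure_def using eps0(1) by (intro SUP_upper) auto
      then have pre0: "hausdorff_pre d s eps0 B < ennreal eps" using sH eps by simp
      then obtain C where Ccov: "B \<subseteq> (\<Union>i. C i)" and Cdiam: "\<And>i. ediam d (C i) \<le> ennreal eps0"
        and Csum: "(\<Sum>i. (if C i = {} then 0 else ennreal ((enn2real (ediam d (C i))) powr s))) < ennreal eps"
        unfolding hausdorff_pre_def by (auto simp: INF_less_iff)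
      define Dm where "Dm i = enn2real (ediam d (C i))" for i
      have Dm: "0 \<le> Dm i" "Dm i \<le> eps0" for i
        unfolding Dm_def using Cdiam[of i] eps0 by (auto intro: enn2real_leI)
      have Cterm: "(if C i = {} then 0 else ennreal ((enn2real (ediam d (C i))) powr s)) = ennreal (Dm i powr s)" for i
      proof (cases "C i = {}")
        case True
        then have "ediam d (C i) = 0" unfolding ediam_def by (simp add: bot_ennreal)
        then show ?thesis using True unfolding Dm_def by simp
      qed (simp add: Dm_def)
      define tt where "tt i = min eps0 ((eps * (1/2)^Suc i) powr (1/s))" for i :: nat
      have tt: "0 < tt i" "tt i powr s \<le> eps * (1/2)^Suc i" for i
      proof -
        show "0 < tt i" unfolding tt_def using eps0 eps by simp
        have "tt i powr s \<le> ((eps * (1/2)^Suc i) powr (1/s)) powr s"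
          unfolding tt_def using s0 eps0 eps by (intro powr_mono2) auto
        also have "\<dots> = eps * (1/2)^Suc i" using s0 eps by (simp add: powr_powr)
        finally show "tt i powr s \<le> eps * (1/2)^Suc i" .
      qed
      define r where "r i = max (Dm i) (tt i)" for i
      have r: "0 < r i" "r i \<le> eps0" "r i < 1" for i
      proof -
        show "0 < r i" unfolding r_def using tt(1)[of i] by simp
        show "r i \<le> eps0" unfolding r_def tt_def using Dm[of i] by simp
        then show "r i < 1" using eps0 by simp
      qed
      have rs: "r i powr s \<le> Dm i powr s + eps * (1/2)^Suc i" for i
      proof (cases "Dm i \<le> tt i")
        case True
        then have "r i = tt i" unfolding r_def by simp
        then have h1: "r i powr s \<le> eps * (1/2)^Suc i" using tt(2)[of i] by simp
        have h2: "0 \<le> Dm i powr s" by simp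
        show ?thesis using add_mono[OF h2 h1] by simp
      next
        case False
        then have "r i = Dm i" unfolding r_def by simp
        then show ?thesis using eps by simp
      qed
      define xc where "xc i = (SOME x. x \<in> C i)" for i
      have Cball: "C i \<subseteq> cball_d d (xc i) (r i)" for i
      proof
        fix z assume z: "z \<in> C i"
        then have xi: "xc i \<in> C i" unfolding xc_def by (rule someI)
        have "ennreal (d (xc i) z) \<le> ediam d (C i)"
          unfolding ediam_def using xi z by (intro SUP_upper2[of "xc i"] SUP_upper2[of z]) auto
        then have "d (xc i) z \<le> Dm i" unfolding Dm_def
          using Cdiam[of i] by (metis Md.nonneg enn2real_ennreal enn2real_mono ennreal_less_top order_le_less_trans)
        then show "z \<in> cball_d d (xc i) (r i)" unfolding cball_d_def r_def by simp
      qed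
      define J where "J k = {i. dk k \<le> r i \<and> r i < 2 * dk k}" for k
      have Jex: "\<exists>k. i \<in> J k" for i
        unfolding J_def dk_def using bucket_exists[OF r(1) r(3)] by auto
      have Juniq: "k = k'" if "i \<in> J k" "i \<in> J k'" for i k k'
        using that unfolding J_def dk_def by (auto intro: bucket_unique)
      define E where "E k = (\<Union>i\<in>J k. cball_d d (xc i) (R * r i))" for k
      have Esets: "E k \<in> sets mu" for k
        unfolding E_def by (intro sets.countable_UN'' cbmu) auto
      have Emeas: "emeasure mu (E k) \<le> (\<Sum>i. if i \<in> J k then ennreal (C0 * (R * r i) powr Q) else 0)" for k
      proof -
        have "E k = (\<Union>i. if i \<in> J k then cball_d d (xc i) (R * r i) else {})" unfolding E_def by auto
        then have "emeasure mu (E k) = emeasure mu (\<Union>i. if i \<in> J k then cball_d d (xc i) (R * r i) else {})"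
          by simp
        also have "\<dots> \<le> (\<Sum>i. emeasure mu (if i \<in> J k then cball_d d (xc i) (R * r i) else {}))"
          by (intro emeasure_subadditive_countably) (auto simp: cbmu)
        also have "\<dots> \<le> (\<Sum>i. if i \<in> J k then ennreal (C0 * (R * r i) powr Q) else 0)"
        proof (intro suminf_le)
          fix i
          show "emeasure mu (if i \<in> J k then cball_d d (xc i) (R * r i) else {})
              \<le> (if i \<in> J k then ennreal (C0 * (R * r i) powr Q) else 0)"
          proof (cases "i \<in> J k")
            case True
            have rp: "0 < R * r i" using Rpos r(1)[of i] by simp
            have "R * r i \<le> R * eps0" using Rpos r(2)[of i] by simp
            then have "R * r i < L" using eps0(3) by simp
            then have "ennreal (R * r i) < ennreal L" using rp by (simp add: ennreal_less_iff)
            then have "ennreal (R * r i) < ediam d UNIV" using Ldiam by simp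
            then show ?thesis using True mu_upper[OF rp] by simp
          qed simp
        qed auto
        finally show ?thesis .
      qed
      define Yk where "Yk k = {u \<in> Y. kakeya_maximal mu d Par I (indicator (E k)) (dk k) u > ennreal (lam k)}" for k
      have Ycov: "Y \<subseteq> (\<Union>k. Yk k)"
      proof
        fix u assume u: "u \<in> Y"
        define a where "a = aa u"
        have aP: "a \<in> Par" and FB: "F u a \<subseteq> B" using aa[OF u] unfolding a_def by auto
        define Fu where "Fu = F u a"
        define U where "U k = (\<Union>i\<in>J k. cball_d d (xc i) (r i))" for k
        have Ub: "U k \<in> sets (metric_borel d)" for k
          unfolding U_def by (intro sets.countable_UN'' cball_metric_borel[OF d_metric]) auto
        have FUs: "Fu \<inter> U k \<in> sets (muF u a)" for k
          unfolding muF_sets[OF u aP] sets_restrict_space Fu_def using Ub by blast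
        have Fsub: "Fu \<subseteq> (\<Union>k. Fu \<inter> U k)"
        proof
          fix z assume zF: "z \<in> Fu"
          then have "z \<in> B" using FB unfolding Fu_def by blast
          then obtain i where "z \<in> C i" using Ccov by blast
          then have zi: "z \<in> cball_d d (xc i) (r i)" using Cball by blast
          obtain k where "i \<in> J k" using Jex by blast
          then show "z \<in> (\<Union>k. Fu \<inter> U k)" using zi zF unfolding U_def by blast
        qed
        have "1 = emeasure (muF u a) Fu" using muF_mass[OF u aP] unfolding Fu_def by simp
        also have "\<dots> \<le> emeasure (muF u a) (\<Union>k. Fu \<inter> U k)"
        proof (rule emeasure_mono[OF Fsub])
          show "(\<Union>k. Fu \<inter> U k) \<in> sets (muF u a)" by (rule sets.countable_UN) (use FUs in blast)
        qed
        also have "\<dots> \<le> (\<Sum>k. emeasure (muF u a) (Fu \<inter> U k))"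
          by (rule emeasure_subadditive_countably) (use FUs in auto)
        finally have one: "1 \<le> (\<Sum>k. emeasure (muF u a) (Fu \<inter> U k))" .
        have "\<exists>k. ennreal (mm k) < emeasure (muF u a) (Fu \<inter> U k)"
        proof (rule ccontr)
          assume "\<not> ?thesis"
          then have "\<And>k. emeasure (muF u a) (Fu \<inter> U k) \<le> ennreal (mm k)" by (simp add: not_less)
          then have "(\<Sum>k. emeasure (muF u a) (Fu \<inter> U k)) \<le> (\<Sum>k. ennreal (mm k))" by (intro suminf_le) auto
          then have "(1::ennreal) \<le> ennreal (1/2)" using one summm by simp
          then have "ennreal 1 \<le> ennreal (1/2)" by (simp only: ennreal_1)
          then have "(1::real) \<le> 1/2" by (subst (asm) ennreal_le_iff) auto
          then show False by simp
        qed
        then obtain k where k: "ennreal (mm k) < emeasure (muF u a) (Fu \<inter> U k)" by blast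
        define Tb where "Tb = tube d I (dk k) u a"
        have tf: "Tb \<in> sets mu" "emeasure mu Tb < \<infinity>" "0 < measure mu Tb"
          using tube_facts[OF u aP dk(1) dk(2)] unfolding Tb_def by auto
        have dbl: "emeasure (muF u a) (Fu \<inter> cball_d d z (2*rr)) \<le> ennreal D * emeasure (muF u a) (Fu \<inter> cball_d d z rr)"
          if "z \<in> Fu" "0 < rr" for z rr
        proof -
          have "emeasure (muF u a) (Fu \<inter> cball_d d z (2*rr)) \<le> ennreal Cdb * emeasure (muF u a) (Fu \<inter> cball_d d z rr)"
            using muF_doubling[OF u aP] that unfolding Fu_def by blast
          also have "\<dots> \<le> ennreal D * emeasure (muF u a) (Fu \<inter> cball_d d z rr)"
            unfolding D_def by (intro mult_right_mono ennreal_leI) auto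
          finally show ?thesis .
        qed
        have A2': "K' * measure (muF u a) (Fu \<inter> cball_d d z (2*dk k)) * dk k powr theta * measure mu Tb
            \<le> measure mu (Tb \<inter> cball_d d z (K*(2*dk k)))"
          if "z \<in> Fu" "measure (muF u a) (Fu \<inter> cball_d d z (2*dk k)) > 0" for z
          using A2[of u a z "dk k" "2*dk k", OF u aP _ dk(1)[of k] dk(2)[of k]] that dk(1)[of k] unfolding Fu_def Tb_def by simp
        have rJ: "dk k \<le> r i \<and> r i < 2*dk k" if "i \<in> J k" for i using that unfolding J_def by simp
        have Nle: "4*K \<le> 2^N" using N by simp
        have kU: "ennreal (mm k) < emeasure (muF u a) (Fu \<inter> (\<Union>i\<in>J k. cball_d d (xc i) (r i)))"
          using k unfolding U_def .
        have mfs: "sets (muF u a) = sets (restrict_space (metric_borel d) Fu)"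
          using muF_sets[OF u aP] unfolding Fu_def .
        have mfm: "emeasure (muF u a) Fu = 1" using muF_mass[OF u aP] unfolding Fu_def .
        obtain G where G: "G \<in> sets mu" "G \<subseteq> (\<Union>i\<in>J k. cball_d d (xc i) ((2*K+1) * r i))"
          and Gm: "K' * dk k powr theta * mm k / D^N * measure mu Tb \<le> measure mu (Tb \<inter> G)"
          using core[OF d_metric mu_borel tf(1) tf(2) mfs mfm D1 dbl A2_K(2) A2_K(1) dk(1) A2' rJ Nle mm0 kU]
          by blast
        have GE: "G \<subseteq> E k" using G(2) unfolding E_def R_def by simp
        have ml: "ennreal (measure mu (Tb \<inter> G) / measure mu Tb) \<le> kakeya_maximal mu d Par I (indicator (E k)) (dk k) u"
          by (rule maxlow[OF aP Tb_def tf(1) tf(2) G(1) GE])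
        have "lam k < K' * dk k powr theta * mm k / D^N"
          using lam_pos[of k] D1 unfolding lam_def by (simp add: field_simps)
        also have "\<dots> \<le> measure mu (Tb \<inter> G) / measure mu Tb"
          using Gm tf(3) by (simp add: pos_le_divide_eq)
        finally have "ennreal (lam k) < ennreal (measure mu (Tb \<inter> G) / measure mu Tb)"
          using lam_pos[of k] by (simp add: ennreal_less_iff)
        then have "u \<in> Yk k" using ml u unfolding Yk_def by simp
        then show "u \<in> (\<Union>k. Yk k)" by blast
      qed
      have termb: "Cpb * lam k powr (- p) * dk k powr (- beta * p) * (C0 * (R * r i) powr Q) \<le> Acon * r i powr s"
        if "i \<in> J k" for i k
      proof -
        have ri: "dk k \<le> r i" "r i \<le> 2 * dk k" using that unfolding J_def by auto
        have X0: "0 < dk k powr theta * (2*dk k) powr gam" using dk(1)[of k] by simp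
        have "lam k powr (-p) = kap powr (-p) * (dk k powr theta * (2*dk k) powr gam) powr (-p)"
          unfolding lam_eq using kap X0 by (simp add: powr_mult)
        moreover have "(R * r i) powr Q = R powr Q * r i powr Q" using Rpos r(1)[of i] by (simp add: powr_mult)
        ultimately have eq: "Cpb * lam k powr (- p) * dk k powr (- beta * p) * (C0 * (R * r i) powr Q)
            = (Cpb * kap powr (-p) * C0 * R powr Q) * ((dk k powr theta * (2*dk k) powr gam) powr (-p) * dk k powr (-beta*p) * r i powr Q)"
          by (simp add: ac_simps)
        have pk: "(dk k powr theta * (2*dk k) powr gam) powr (-p) * dk k powr (-beta*p) * r i powr Q
            \<le> 2 powr ((theta+beta)*p) * r i powr s"
          by (rule powr_key[OF dk(1) ri(1) ri(2) A2_theta(1) _ p0 _]) (use p_beta gam gp in \<open>auto simp: algebra_simps\<close>)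
        have c0: "0 \<le> Cpb * kap powr (-p) * C0 * R powr Q" using p_beta C0_pos by simp
        have "(Cpb * kap powr (-p) * C0 * R powr Q) * ((dk k powr theta * (2*dk k) powr gam) powr (-p) * dk k powr (-beta*p) * r i powr Q)
            \<le> (Cpb * kap powr (-p) * C0 * R powr Q) * (2 powr ((theta+beta)*p) * r i powr s)"
          using mult_left_mono[OF pk c0] .
        also have "\<dots> = Acon * r i powr s" unfolding Acon_def by (simp add: ac_simps)
        finally have fin: "(Cpb * kap powr (-p) * C0 * R powr Q) * ((dk k powr theta * (2*dk k) powr gam) powr (-p) * dk k powr (-beta*p) * r i powr Q)
            \<le> Acon * r i powr s" .
        show ?thesis by (subst eq, rule fin)
      qed
      have key: "emeasure nu Y \<le> ennreal Acon * (ennreal eps + ennreal eps)"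
      proof -
        have "emeasure nu Y = outer_measure_of nu Y" using Ysets by simp
        also have "\<dots> \<le> outer_measure_of nu (\<Union>k. Yk k)" by (rule outer_measure_of_mono[OF Ycov])
        also have "\<dots> \<le> (\<Sum>k. outer_measure_of nu (Yk k))"
          by (rule outer_measure_of_countable_subadd) (simp add: spnu)
        also have "\<dots> \<le> (\<Sum>k. ennreal (Cpb * lam k powr (- p) * dk k powr (- beta * p)) * emeasure mu (E k))"
        proof (intro suminf_le)
          fix k
          have "outer_measure_of nu (Yk k) \<le> ennreal (Cpb * lam k powr (- p) * dk k powr (- beta * p)) * emeasure (completion mu) (E k)"
            unfolding Yk_def by (rule maximal_est) (use Esets lam_pos dk in auto)
          then show "outer_measure_of nu (Yk k) \<le> ennreal (Cpb * lam k powr (- p) * dk k powr (- beta * p)) * emeasure mu (E k)"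
            using Esets[of k] by (simp add: main_part)
        qed auto
        also have "\<dots> \<le> (\<Sum>k. \<Sum>i. if i \<in> J k then ennreal (Acon * r i powr s) else 0)"
        proof (intro suminf_le)
          fix k
          have "ennreal (Cpb * lam k powr (- p) * dk k powr (- beta * p)) * emeasure mu (E k)
              \<le> ennreal (Cpb * lam k powr (- p) * dk k powr (- beta * p)) * (\<Sum>i. if i \<in> J k then ennreal (C0 * (R * r i) powr Q) else 0)"
            by (intro mult_left_mono Emeas) auto
          also have "\<dots> = (\<Sum>i. ennreal (Cpb * lam k powr (- p) * dk k powr (- beta * p)) * (if i \<in> J k then ennreal (C0 * (R * r i) powr Q) else 0))"
            by (rule ennreal_suminf_cmult[symmetric])
          also have "\<dots> \<le> (\<Sum>i. if i \<in> J k then ennreal (Acon * r i powr s) else 0)"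
          proof (intro suminf_le)
            fix i
            show "ennreal (Cpb * lam k powr (- p) * dk k powr (- beta * p)) * (if i \<in> J k then ennreal (C0 * (R * r i) powr Q) else 0)
                \<le> (if i \<in> J k then ennreal (Acon * r i powr s) else 0)"
            proof (cases "i \<in> J k")
              case True
              have "ennreal (Cpb * lam k powr (- p) * dk k powr (- beta * p)) * ennreal (C0 * (R * r i) powr Q)
                  = ennreal (Cpb * lam k powr (- p) * dk k powr (- beta * p) * (C0 * (R * r i) powr Q))"
                using p_beta C0_pos by (simp add: ennreal_mult)
              also have "\<dots> \<le> ennreal (Acon * r i powr s)" using termb[OF True] by (rule ennreal_leI)
              finally show ?thesis using True by simp
            qed simp
          qed auto
          finally show "ennreal (Cpb * lam k powr (- p) * dk k powr (- beta * p)) * emeasure mu (E k)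
              \<le> (\<Sum>i. if i \<in> J k then ennreal (Acon * r i powr s) else 0)" .
        qed auto
        also have "\<dots> = (\<Sum>i. \<Sum>k. if i \<in> J k then ennreal (Acon * r i powr s) else 0)"
          by (rule ennreal_suminf_swap)
        also have "\<dots> = (\<Sum>i. ennreal (Acon * r i powr s))"
        proof (intro suminf_cong)
          fix i
          obtain k0 where k0: "i \<in> J k0" using Jex by blast
          have "(\<lambda>k. if i \<in> J k then ennreal (Acon * r i powr s) else 0) = (\<lambda>k. if k = k0 then ennreal (Acon * r i powr s) else 0)"
            using Juniq k0 by (auto intro!: ext)
          moreover have "(\<lambda>k. if k = k0 then ennreal (Acon * r i powr s) else 0) sums ennreal (Acon * r i powr s)"
            using sums_single[of k0 "\<lambda>_. ennreal (Acon * r i powr s)"] by simp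
          ultimately show "(\<Sum>k. if i \<in> J k then ennreal (Acon * r i powr s) else 0) = ennreal (Acon * r i powr s)"
            by (simp add: sums_iff)
        qed
        also have "\<dots> \<le> (\<Sum>i. ennreal Acon * ennreal (Dm i powr s) + ennreal Acon * ennreal (eps * (1/2)^Suc i))"
        proof (intro suminf_le)
          fix i
          have "ennreal (Acon * r i powr s) \<le> ennreal (Acon * (Dm i powr s + eps * (1/2)^Suc i))"
            using Acon rs[of i] by (intro ennreal_leI mult_left_mono) auto
          also have "\<dots> = ennreal Acon * ennreal (Dm i powr s) + ennreal Acon * ennreal (eps * (1/2)^Suc i)"
          proof -
            have e1: "ennreal (Acon * (Dm i powr s + eps * (1/2)^Suc i)) = ennreal (Acon * Dm i powr s) + ennreal (Acon * (eps * (1/2)^Suc i))"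
              by (subst distrib_left, rule ennreal_plus) (use Acon eps in auto)
            have e2: "ennreal (Acon * Dm i powr s) = ennreal Acon * ennreal (Dm i powr s)"
              by (rule ennreal_mult) (use Acon in auto)
            have e3: "ennreal (Acon * (eps * (1/2)^Suc i)) = ennreal Acon * ennreal (eps * (1/2)^Suc i)"
              by (rule ennreal_mult) (use Acon eps in auto)
            show ?thesis using e1 e2 e3 by (simp only:)
          qed
          finally show "ennreal (Acon * r i powr s) \<le> ennreal Acon * ennreal (Dm i powr s) + ennreal Acon * ennreal (eps * (1/2)^Suc i)" .
        qed auto
        also have "\<dots> = ennreal Acon * (\<Sum>i. ennreal (Dm i powr s)) + ennreal Acon * (\<Sum>i. ennreal (eps * (1/2)^Suc i))"
          by (simp add: suminf_add[symmetric] ennreal_suminf_cmult)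
        also have "\<dots> \<le> ennreal Acon * ennreal eps + ennreal Acon * ennreal eps"
        proof (intro add_mono mult_left_mono)
          show "(\<Sum>i. ennreal (Dm i powr s)) \<le> ennreal eps"
            using Csum Cterm by (simp add: less_imp_le)
          have "(\<lambda>i. eps * (1/2::real)^Suc i) sums (eps * 1)"
            by (intro sums_mult power_half_series)
          then have "(\<Sum>i. ennreal (eps * (1/2)^Suc i)) = ennreal eps"
            using eps by (subst suminf_ennreal_eq) auto
          then show "(\<Sum>i. ennreal (eps * (1/2)^Suc i)) \<le> ennreal eps" by simp
        qed auto
        finally show ?thesis by (simp add: distrib_left)
      qed
      have "ennreal Acon * (ennreal eps + ennreal eps) = ennreal (y0' / 2)"
        using Acon eps unfolding eps_def by (simp add: ennreal_mult[symmetric] ennreal_plus[symmetric] field_simps)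
      then have "ennreal y0' \<le> ennreal (y0' / 2)" using key nuY(1) by simp
      then show False using nuY(2) by simp
    qed
  qed
qed


end
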